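(* For every nonempty standard subset $J\subseteq\{1,\dots,t\}$ one has $\mathrm{Ext}^1_{\mathcal A_{t,1}}(\Delta(J),\Delta(J))=0$.
   Context: Let $k$ be an algebraically closed field and $t\ge 3$ an integer. $\mathcal A_{t,1}$ is the quotient of the path algebra over $k$ of the quiver with vertices $1,\dots,t$, arrows $\alpha_i:i\to i+1$ ($1\le i\le t-1$) and $\beta_j:j+2\to j$ ($1\le j\le t-2$), by the relations $\beta_1\alpha_2=0$ and $\beta_{i+1}\alpha_{i+2}=\alpha_i\beta_i$ for $1\le i\le t-3$ (compositions of linear maps, written right to left). Modules are finite-dimensional and identified with representations $(M_i;\alpha_i,\beta_j)$ of the quiver satisfying these relations. A subset $J\subseteq\{1,\dots,t\}$ is standard if $j\in J$ implies $j+1\notin J$. For a nonempty standard subset $J$, the standard module $\Delta(J)$ has $\Delta(J)_i=k^{l}$ where $l=\#\{j\in J: j\le i\}$, with standard basis $e_1,\dots,e_l$; each $\alpha_i$ is the natural inclusion $e_h\mapsto e_h$, and each $\beta_j$ sends $e_h\mapsto e_{h-1}$ for $h\ge 2$ and $e_1\mapsto 0$. *)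

theory Defs
  imports "HOL-Computational_Algebra.Polynomial" "Jordan_Normal_Form.Matrix"
begin

text \<open>A finite-dimensional representation of the quiver of A_{t,1}: at vertex i the space
  k^(dimv M i) (every finite-dimensional space is isomorphic to one of these);
  alp M i : vertex i -> i+1 and bet M j : vertex j+2 -> j are matrices.\<close>
record 'k qrep =
  dimv :: "nat \<Rightarrow> nat"
  alp  :: "nat \<Rightarrow> 'k mat"
  bet  :: "nat \<Rightarrow> 'k mat"

definition is_rep :: "nat \<Rightarrow> 'k::field qrep \<Rightarrow> bool" where
  "is_rep t M \<longleftrightarrow>
     (\<forall>i\<in>{1..t-1}. alp M i \<in> carrier_mat (dimv M (i+1)) (dimv M i)) \<and>
     (\<forall>j\<in>{1..t-2}. bet M j \<in> carrier_mat (dimv M j) (dimv M (j+2))) \<and>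
     bet M 1 * alp M 2 = 0\<^sub>m (dimv M 1) (dimv M 2) \<and>
     (\<forall>i\<in>{1..t-3}. bet M (i+1) * alp M (i+2) = alp M i * bet M i)"

definition is_hom :: "nat \<Rightarrow> 'k::field qrep \<Rightarrow> 'k qrep \<Rightarrow> (nat \<Rightarrow> 'k mat) \<Rightarrow> bool" where
  "is_hom t M N f \<longleftrightarrow>
     (\<forall>i\<in>{1..t}. f i \<in> carrier_mat (dimv N i) (dimv M i)) \<and>
     (\<forall>i\<in>{1..t-1}. f (i+1) * alp M i = alp N i * f i) \<and>
     (\<forall>j\<in>{1..t-2}. f j * bet M j = bet N j * f (j+2))"

definition short_exact :: "nat \<Rightarrow> 'k::field qrep \<Rightarrow> 'k qrep \<Rightarrow> 'k qrep
    \<Rightarrow> (nat \<Rightarrow> 'k mat) \<Rightarrow> (nat \<Rightarrow> 'k mat) \<Rightarrow> bool" where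
  "short_exact t N E M f g \<longleftrightarrow>
     is_rep t N \<and> is_rep t E \<and> is_rep t M \<and> is_hom t N E f \<and> is_hom t E M g \<and>
     (\<forall>i\<in>{1..t}.
        (\<forall>u\<in>carrier_vec (dimv N i). f i *\<^sub>v u = 0\<^sub>v (dimv E i) \<longrightarrow> u = 0\<^sub>v (dimv N i)) \<and>
        (\<forall>v\<in>carrier_vec (dimv E i).
            g i *\<^sub>v v = 0\<^sub>v (dimv M i) \<longleftrightarrow> (\<exists>u\<in>carrier_vec (dimv N i). v = f i *\<^sub>v u)) \<and>
        (\<forall>w\<in>carrier_vec (dimv M i). \<exists>v\<in>carrier_vec (dimv E i). g i *\<^sub>v v = w))"

text \<open>Ext^1(M,N) = 0 (Yoneda description): every extension of M by N splits.\<close>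
definition Ext1_zero :: "nat \<Rightarrow> 'k::field qrep \<Rightarrow> 'k qrep \<Rightarrow> bool" where
  "Ext1_zero t M N \<longleftrightarrow>
     (\<forall>(E::'k qrep) f g. short_exact t N E M f g \<longrightarrow>
        (\<exists>s. is_hom t M E s \<and> (\<forall>i\<in>{1..t}. g i * s i = 1\<^sub>m (dimv M i))))"

definition standard :: "nat \<Rightarrow> nat set \<Rightarrow> bool" where
  "standard t J \<longleftrightarrow> J \<subseteq> {1..t} \<and> (\<forall>j\<in>J. j + 1 \<notin> J)"

text \<open>Standard module Delta(J); basis vector e_h is index h-1.\<close>
definition Delta :: "nat set \<Rightarrow> 'k::field qrep" where
  "Delta J = (let l = (\<lambda>i. card {j\<in>J. j \<le> i}) in
     \<lparr> dimv = l,
       alp = (\<lambda>i. mat (l (i+1)) (l i) (\<lambda>(r,c). if r = c then 1 else 0)),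
       bet = (\<lambda>j. mat (l j) (l (j+2)) (\<lambda>(r,c). if c = r + 1 then 1 else 0)) \<rparr>)"

definition alg_closed_field :: "'k::field itself \<Rightarrow> bool" where
  "alg_closed_field _ \<longleftrightarrow> (\<forall>p::'k poly. degree p > 0 \<longrightarrow> (\<exists>x. poly p x = 0))"

end

theory Submission imports Defs begin

definition lJ :: "nat set \<Rightarrow> nat \<Rightarrow> nat" where
  "lJ J i = card {j\<in>J. j \<le> i}"

lemma dimv_Delta[simp]: "dimv (Delta J) = lJ J"
  by (simp add: Delta_def Let_def lJ_def[abs_def])
lemma alp_Delta[simp]: "alp (Delta J) i = mat (lJ J (i+1)) (lJ J i) (\<lambda>(r,c). if r = c then 1 else 0)"
  by (simp add: Delta_def Let_def lJ_def[abs_def])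
lemma bet_Delta[simp]: "bet (Delta J) j = mat (lJ J j) (lJ J (j+2)) (\<lambda>(r,c). if c = r + 1 then 1 else 0)"
  by (simp add: Delta_def Let_def lJ_def[abs_def])

lemma lJ_0: "standard t J \<Longrightarrow> lJ J 0 = 0"
  unfolding lJ_def standard_def by (auto intro: Nat.gr0I)

lemma lJ_Suc: assumes "standard t J"
  shows "lJ J (Suc i) = lJ J i + (if Suc i \<in> J then 1 else 0)"
proof -
  have fin: "finite {j\<in>J. j \<le> i}" by simp
  show ?thesis
  proof (cases "Suc i \<in> J")
    case True
    have "{j\<in>J. j \<le> Suc i} = insert (Suc i) {j\<in>J. j \<le> i}" using True by auto
    then show ?thesis using True fin unfolding lJ_def by simp
  next
    case False
    have "{j\<in>J. j \<le> Suc i} = {j\<in>J. j \<le> i}" using False le_Suc_eq by auto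
    then show ?thesis using False unfolding lJ_def by simp
  qed
qed

lemma lJ_mono: assumes "standard t J" "i \<le> k" shows "lJ J i \<le> lJ J k"
  using assms(2) by (induction k) (auto simp: lJ_Suc[OF assms(1)] le_Suc_eq)

lemma lJ_SS: assumes "standard t J" shows "lJ J (Suc (Suc i)) \<le> lJ J i + 1"
  using assms lJ_Suc[OF assms, of i] lJ_Suc[OF assms, of "Suc i"] unfolding standard_def by auto

lemma lJ_new: assumes "standard t J" "Suc i \<in> J" shows "lJ J i = lJ J (i - 1)"
proof (cases i)
  case (Suc k) then show ?thesis using assms lJ_Suc[OF assms(1), of k] unfolding standard_def by auto
qed simp

lemma mat_unit: assumes A: "(A :: 'k::field mat) \<in> carrier_mat nr nc" and j: "j < nc"
  shows "A *\<^sub>v unit_vec nc j = col A j"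
proof -
  have "col (A * 1\<^sub>m nc) j = A *\<^sub>v col (1\<^sub>m nc) j" by (rule col_mult2[OF A one_carrier_mat j])
  then show ?thesis using right_mult_one_mat[OF A] col_one[OF j] by metis
qed

lemma alpD_unit: assumes "standard t J" "c < lJ J i"
  shows "alp (Delta J) i *\<^sub>v unit_vec (lJ J i) c = (unit_vec (lJ J (i+1)) c :: 'k::field vec)"
proof -
  have le: "lJ J i \<le> lJ J (i+1)" using lJ_mono[OF assms(1), of i "i+1"] by simp
  have "alp (Delta J) i *\<^sub>v unit_vec (lJ J i) c = col (alp (Delta J) i) c"
    by (rule mat_unit[of _ "lJ J (i+1)"]) (use assms in simp_all)
  also have "\<dots> = vec (lJ J (i+1)) (\<lambda>r. if r = c then 1 else 0)" using assms(2) by simp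
  also have "\<dots> = unit_vec (lJ J (i+1)) c" by (simp add: unit_vec_def)
  finally show ?thesis .
qed

lemma betD_unit: assumes "standard t J" "c < lJ J (j+2)"
  shows "bet (Delta J) j *\<^sub>v unit_vec (lJ J (j+2)) c =
     (if c = 0 then 0\<^sub>v (lJ J j) else (unit_vec (lJ J j) (c-1) :: 'k::field vec))"
proof -
  have "bet (Delta J) j *\<^sub>v unit_vec (lJ J (j+2)) c = col (bet (Delta J) j) c"
    by (rule mat_unit[of _ "lJ J j"]) (use assms in simp_all)
  also have "\<dots> = vec (lJ J j) (\<lambda>r. if c = r + 1 then 1 else 0)" using assms(2) by simp
  also have "\<dots> = (if c = 0 then 0\<^sub>v (lJ J j) else (unit_vec (lJ J j) (c-1) :: 'k::field vec))"
  proof (cases "c = 0")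
    case True then show ?thesis by (simp add: zero_vec_def)
  next
    case False
    have "vec (lJ J j) (\<lambda>r. if c = r + 1 then 1 else 0) = (unit_vec (lJ J j) (c-1) :: 'k vec)"
      unfolding unit_vec_def by (rule arg_cong[where f="vec _"]) (use False in auto)
    then show ?thesis using False by simp
  qed
  finally show ?thesis .
qed

lemma betD_pre: assumes "lJ J (j+2) = lJ J j + 1" "u \<in> carrier_vec (lJ J j)"
  shows "bet (Delta J) j *\<^sub>v vec (lJ J (j+2)) (\<lambda>k. if k = 0 then 0 else u $ (k-1)) = (u :: 'k::field vec)"
proof (rule eq_vecI)
  fix r assume r: "r < dim_vec u"
  define u' where "u' = vec (lJ J (j+2)) (\<lambda>k. if k = 0 then 0 else u $ (k-1))"
  have rl: "r < lJ J j" using r assms(2) by simp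
  have "(bet (Delta J) j *\<^sub>v u') $ r = row (bet (Delta J) j) r \<bullet> u'"
    using rl by (simp only: index_mult_mat_vec dim_row_mat bet_Delta)
  also have "\<dots> = (\<Sum>k\<in>{0..<lJ J j + 1}. row (bet (Delta J) j) r $ k * u' $ k)"
    unfolding scalar_prod_def u'_def using assms(1) by simp
  also have "\<dots> = (\<Sum>k\<in>{0..<lJ J j + 1}. if k = r + 1 then u $ r else 0)"
  proof (rule sum.cong)
    fix k assume k: "k \<in> {0..<lJ J j + 1}"
    have e1: "row (bet (Delta J) j) r $ k = (if k = r + 1 then 1 else 0)" using k rl assms(1) by simp
    have e2: "u' $ k = (if k = 0 then 0 else u $ (k-1))" using k assms(1) unfolding u'_def by simp
    show "row (bet (Delta J) j) r $ k * u' $ k = (if k = r + 1 then u $ r else 0)"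
      unfolding e1 e2 by simp
  qed simp
  also have "\<dots> = u $ r" using rl by (subst sum.delta) simp_all
  finally show "(bet (Delta J) j *\<^sub>v vec (lJ J (j+2)) (\<lambda>k. if k = 0 then 0 else u $ (k-1))) $ r = u $ r"
    unfolding u'_def .
next
  show "dim_vec (bet (Delta J) j *\<^sub>v vec (lJ J (j+2)) (\<lambda>k. if k = 0 then 0 else u $ (k-1))) = dim_vec u"
    using assms(2) by simp
qed


fun Xv :: "'k::field qrep \<Rightarrow> (nat \<Rightarrow> 'k mat) \<Rightarrow> nat set \<Rightarrow> nat \<Rightarrow> nat \<Rightarrow> 'k vec" where
  "Xv E g J 0 c = 0\<^sub>v 0"
| "Xv E g J (Suc i) c = (if c < lJ J i then alp E i *\<^sub>v Xv E g J i c else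
     (let z = (if c = 0 then 0\<^sub>v (dimv E (i - 1)) else Xv E g J (i - 1) (c - 1)) in
      SOME x. x \<in> carrier_vec (dimv E (Suc i)) \<and> g (Suc i) *\<^sub>v x = unit_vec (lJ J (Suc i)) c
        \<and> (3 \<le> Suc i \<longrightarrow> bet E (i - 1) *\<^sub>v x = z)))"

declare Xv.simps(2)[simp del]


locale ext_setup =
  fixes t :: nat and J :: "nat set" and E :: "'k::field qrep" and f g :: "nat \<Rightarrow> 'k mat"
  assumes t3: "t \<ge> 3" and st: "standard t J"
    and se: "short_exact t (Delta J) E (Delta J) f g"
begin

abbreviation "l \<equiv> lJ J"
abbreviation "dE \<equiv> dimv E"
abbreviation "X \<equiv> Xv E g J"
abbreviation "D \<equiv> (Delta J :: 'k qrep)"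

lemma alpE: "1 \<le> i \<Longrightarrow> i + 1 \<le> t \<Longrightarrow> alp E i \<in> carrier_mat (dE (i+1)) (dE i)"
  using se unfolding short_exact_def is_rep_def by auto
lemma betE: "1 \<le> j \<Longrightarrow> j + 2 \<le> t \<Longrightarrow> bet E j \<in> carrier_mat (dE j) (dE (j+2))"
  using se unfolding short_exact_def is_rep_def by auto
lemma rel1: "bet E 1 * alp E 2 = 0\<^sub>m (dE 1) (dE 2)"
  using se unfolding short_exact_def is_rep_def by auto
lemma rel2: "1 \<le> i \<Longrightarrow> i + 3 \<le> t \<Longrightarrow> bet E (i+1) * alp E (i+2) = alp E i * bet E i"
  using se unfolding short_exact_def is_rep_def by auto
lemma fC: "1 \<le> i \<Longrightarrow> i \<le> t \<Longrightarrow> f i \<in> carrier_mat (dE i) (l i)"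
  using se unfolding short_exact_def is_hom_def by auto
lemma gC: "1 \<le> i \<Longrightarrow> i \<le> t \<Longrightarrow> g i \<in> carrier_mat (l i) (dE i)"
  using se unfolding short_exact_def is_hom_def by auto
lemma galp: "1 \<le> i \<Longrightarrow> i + 1 \<le> t \<Longrightarrow> g (i+1) * alp E i = alp D i * g i"
  using se unfolding short_exact_def is_hom_def by auto
lemma gbet: "1 \<le> j \<Longrightarrow> j + 2 \<le> t \<Longrightarrow> g j * bet E j = bet D j * g (j+2)"
  using se unfolding short_exact_def is_hom_def by auto
lemma fbet: "1 \<le> j \<Longrightarrow> j + 2 \<le> t \<Longrightarrow> f j * bet D j = bet E j * f (j+2)"
  using se unfolding short_exact_def is_hom_def by auto
lemma exact: "1 \<le> i \<Longrightarrow> i \<le> t \<Longrightarrow> v \<in> carrier_vec (dE i) \<Longrightarrow>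
    g i *\<^sub>v v = 0\<^sub>v (l i) \<longleftrightarrow> (\<exists>u\<in>carrier_vec (l i). v = f i *\<^sub>v u)"
  using se unfolding short_exact_def by auto
lemma surj: "1 \<le> i \<Longrightarrow> i \<le> t \<Longrightarrow> w \<in> carrier_vec (l i) \<Longrightarrow>
    \<exists>v\<in>carrier_vec (dE i). g i *\<^sub>v v = w"
  using se unfolding short_exact_def by auto

lemma zero_mat_vec: "v \<in> carrier_vec m \<Longrightarrow> 0\<^sub>m n m *\<^sub>v v = (0\<^sub>v n :: 'k vec)"
  by (intro eq_vecI) (auto simp: scalar_prod_def)

lemma mat_vec_zero: "A \<in> carrier_mat n m \<Longrightarrow> A *\<^sub>v 0\<^sub>v m = (0\<^sub>v n :: 'k vec)"
  by (intro eq_vecI) (auto simp: scalar_prod_def)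

lemma betD_C: "bet D j \<in> carrier_mat (l j) (l (j+2))" by simp
lemma alpD_C: "alp D j \<in> carrier_mat (l (j+1)) (l j)" by simp

lemma gf: assumes "1 \<le> i" "i \<le> t" "u \<in> carrier_vec (l i)"
  shows "g i *\<^sub>v (f i *\<^sub>v u) = 0\<^sub>v (l i)"
  using exact[OF assms(1,2), of "f i *\<^sub>v u"] fC[OF assms(1,2)] assms(3) by auto

lemma newcol:
  assumes i3: "3 \<le> i" and it: "i \<le> t" and iJ: "i \<in> J" and c: "c = l (i - 1)"
    and zC: "z \<in> carrier_vec (dE (i-2))"
    and gz: "g (i-2) *\<^sub>v z = (if c = 0 then 0\<^sub>v (l (i-2)) else unit_vec (l (i-2)) (c-1))"
  shows "\<exists>x. x \<in> carrier_vec (dE i) \<and> g i *\<^sub>v x = unit_vec (l i) c \<and> bet E (i-2) *\<^sub>v x = z"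
proof -
  obtain k where k: "i = k + 2" "1 \<le> k" using i3 by (intro that[of "i - 2"]) auto
  have lk: "l i = l k + 1" and lc: "c = l k"
    using lJ_Suc[OF st, of "Suc k"] lJ_Suc[OF st, of k] iJ st c k unfolding standard_def by auto
  have B: "bet E k \<in> carrier_mat (dE k) (dE i)" using betE[of k] k it by auto
  have G: "g i \<in> carrier_mat (l i) (dE i)" using gC[of i] k it by auto
  have Gk: "g k \<in> carrier_mat (l k) (dE k)" using gC[of k] k it by auto
  have F: "f i \<in> carrier_mat (dE i) (l i)" using fC[of i] k it by auto
  have Fk: "f k \<in> carrier_mat (dE k) (l k)" using fC[of k] k it by auto
  have ck: "c < l i" using lk lc by simp
  obtain y where y: "y \<in> carrier_vec (dE i)" "g i *\<^sub>v y = unit_vec (l i) c"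
    using surj[of i "unit_vec (l i) c"] k it by auto
  define w where "w = bet E k *\<^sub>v y - z"
  have zC': "z \<in> carrier_vec (dE k)" using zC k by simp
  have wC: "w \<in> carrier_vec (dE k)" using B y zC' unfolding w_def by auto
  have "g k *\<^sub>v (bet E k *\<^sub>v y) = (g k * bet E k) *\<^sub>v y" using Gk B y by simp
  also have "\<dots> = (bet D k * g i) *\<^sub>v y" using gbet[of k] k it by simp
  also have "\<dots> = bet D k *\<^sub>v unit_vec (l i) c"
    using assoc_mult_mat_vec[OF betD_C[of k] G[unfolded k] y(1)[unfolded k]] y(2) k by (simp del: bet_Delta)
  also have "\<dots> = (if c = 0 then 0\<^sub>v (l k) else unit_vec (l k) (c-1))"
    using betD_unit[OF st, of c k] ck k by simp
  finally have "g k *\<^sub>v w = 0\<^sub>v (l k)"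
    unfolding w_def using gz k Gk B y zC' by (simp add: mult_minus_distrib_mat_vec[OF Gk])
  then obtain u where u: "u \<in> carrier_vec (l k)" "w = f k *\<^sub>v u"
    using exact[of k w] wC k it by auto
  define u' where "u' = vec (l (k+2)) (\<lambda>j. if j = 0 then 0 else u $ (j-1))"
  have u'C: "u' \<in> carrier_vec (l i)" unfolding u'_def k by simp
  have bu: "bet D k *\<^sub>v u' = u" unfolding u'_def using betD_pre[of J k u] lk k u by simp
  define x where "x = y - f i *\<^sub>v u'"
  have fu'C: "f i *\<^sub>v u' \<in> carrier_vec (dE i)" using F u'C by simp
  have xC: "x \<in> carrier_vec (dE i)" unfolding x_def using y fu'C by simp
  have "g i *\<^sub>v x = g i *\<^sub>v y - g i *\<^sub>v (f i *\<^sub>v u')"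
    unfolding x_def using mult_minus_distrib_mat_vec[OF G y(1) fu'C] .
  also have "\<dots> = unit_vec (l i) c" using gf[of i u'] u'C k it y by simp
  finally have gx: "g i *\<^sub>v x = unit_vec (l i) c" .
  have "bet E k *\<^sub>v (f i *\<^sub>v u') = (bet E k * f i) *\<^sub>v u'" using B F u'C by simp
  also have "\<dots> = (f k * bet D k) *\<^sub>v u'" using fbet[of k] k it by simp
  also have "\<dots> = f k *\<^sub>v u"
    using assoc_mult_mat_vec[OF Fk betD_C[of k] u'C[unfolded k]] bu by (simp del: bet_Delta)
  finally have bfu: "bet E k *\<^sub>v (f i *\<^sub>v u') = w" using u by simp
  have "bet E k *\<^sub>v x = bet E k *\<^sub>v y - bet E k *\<^sub>v (f i *\<^sub>v u')"
    unfolding x_def using mult_minus_distrib_mat_vec[OF B y(1) fu'C] .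
  also have "\<dots> = z" unfolding bfu w_def using B y zC' by (intro eq_vecI) auto
  finally show ?thesis using xC gx k by auto
qed


lemma inv: "1 \<le> i \<Longrightarrow> i \<le> t \<Longrightarrow> c < l i \<Longrightarrow>
   X i c \<in> carrier_vec (dE i) \<and> g i *\<^sub>v X i c = unit_vec (l i) c \<and>
   (3 \<le> i \<longrightarrow> bet E (i-2) *\<^sub>v X i c = (if c = 0 then 0\<^sub>v (dE (i-2)) else X (i-2) (c-1)))"
proof (induction i arbitrary: c rule: less_induct)
  case (less i)
  obtain i' where i: "i = Suc i'" using less.prems by (cases i) auto
  show ?case
  proof (cases "c < l i'")
    case True
    have i'1: "1 \<le> i'" using True lJ_0[OF st] by (cases i') auto
    have IH: "X i' c \<in> carrier_vec (dE i') \<and> g i' *\<^sub>v X i' c = unit_vec (l i') c \<and>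
      (3 \<le> i' \<longrightarrow> bet E (i'-2) *\<^sub>v X i' c = (if c = 0 then 0\<^sub>v (dE (i'-2)) else X (i'-2) (c-1)))"
      using less.IH[of i' c] i i'1 less.prems True by auto
    have Xi: "X i c = alp E i' *\<^sub>v X i' c" using True i by (simp add: Xv.simps(2))
    have A: "alp E i' \<in> carrier_mat (dE i) (dE i')" using alpE[of i'] i'1 less.prems i by auto
    have G: "g i' \<in> carrier_mat (l i') (dE i')" using gC[of i'] i'1 less.prems i by auto
    have G2: "g i \<in> carrier_mat (l i) (dE i)" using gC[of i] less.prems by auto
    have c1: "X i c \<in> carrier_vec (dE i)" using Xi A IH by simp
    have "g i *\<^sub>v X i c = (g i * alp E i') *\<^sub>v X i' c" using Xi A G2 IH by simp
    also have "\<dots> = (alp D i' * g i') *\<^sub>v X i' c" using galp[of i'] i'1 less.prems i by simp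
    also have "\<dots> = alp D i' *\<^sub>v unit_vec (l i') c"
      by (subst assoc_mult_mat_vec[of _ "l (i'+1)" "l i'" _ "dE i'"]) (use G IH in \<open>simp_all del: alp_Delta\<close>, simp)
    also have "\<dots> = unit_vec (l i) c" using alpD_unit[OF st True] i by simp
    finally have c2: "g i *\<^sub>v X i c = unit_vec (l i) c" .
    have c3: "bet E (i-2) *\<^sub>v X i c = (if c = 0 then 0\<^sub>v (dE (i-2)) else X (i-2) (c-1))"
      if i3: "3 \<le> i"
    proof (cases "i' = 2")
      case True
      have "l 2 \<le> 1" using lJ_SS[OF st, of 0] lJ_0[OF st] by (simp add: numeral_2_eq_2)
      then have c0: "c = 0" using \<open>c < l i'\<close> True by simp
      have B: "bet E 1 \<in> carrier_mat (dE 1) (dE 3)" using betE[of 1] t3 by (simp add: numeral_3_eq_3)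
      have "bet E (i-2) *\<^sub>v X i c = (bet E 1 * alp E 2) *\<^sub>v X i' c"
        using Xi True i A B IH by simp
      also have "\<dots> = 0\<^sub>v (dE 1)" using rel1 IH True zero_mat_vec by simp
      finally show ?thesis using c0 True i by simp
    next
      case False
      then obtain k where k: "i' = k + 2" "1 \<le> k" using i3 i
        by (intro that[of "i' - 2"]) auto
      have B: "bet E (k+1) \<in> carrier_mat (dE (k+1)) (dE i)" using betE[of "k+1"] less.prems k i by auto
      have Bk: "bet E k \<in> carrier_mat (dE k) (dE i')" using betE[of "k"] less.prems k i by auto
      have Ak: "alp E k \<in> carrier_mat (dE (k+1)) (dE k)" using alpE[of k] less.prems k i by auto
      have "bet E (i-2) *\<^sub>v X i c = (bet E (k+1) * alp E (k+2)) *\<^sub>v X i' c"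
        using Xi k i A B IH by simp
      also have "\<dots> = (alp E k * bet E k) *\<^sub>v X i' c" using rel2[of k] k i less.prems by simp
      also have "\<dots> = alp E k *\<^sub>v (if c = 0 then 0\<^sub>v (dE k) else X k (c-1))"
        using IH Ak Bk k by simp
      also have "\<dots> = (if c = 0 then 0\<^sub>v (dE (i-2)) else X (i-2) (c-1))"
      proof (cases "c = 0")
        case True then show ?thesis using Ak k i mat_vec_zero[OF Ak] by simp
      next
        case False
        have "c - 1 < l k" using lJ_SS[OF st, of k] \<open>c < l i'\<close> k False by simp
        then have "X (Suc k) (c-1) = alp E k *\<^sub>v X k (c-1)" by (simp add: Xv.simps(2))
        then show ?thesis using False k i by simp
      qed
      finally show ?thesis .
    qed
    show ?thesis using c1 c2 c3 by blast
  next
    case False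
    have li: "l i = l i' + (if i \<in> J then 1 else 0)" using lJ_Suc[OF st, of i'] i by simp
    have iJ: "i \<in> J" and c: "c = l i'" using False less.prems li by (auto split: if_splits)
    define z where "z = (if c = 0 then 0\<^sub>v (dE (i' - 1)) else X (i' - 1) (c - 1))"
    define P where "P = (\<lambda>x. x \<in> carrier_vec (dE (Suc i')) \<and> g (Suc i') *\<^sub>v x = unit_vec (l (Suc i')) c
        \<and> (3 \<le> Suc i' \<longrightarrow> bet E (i' - 1) *\<^sub>v x = z))"
    have Xi: "X i c = (SOME x. P x)" unfolding P_def z_def using False i by (simp add: Xv.simps(2) Let_def)
    have ex: "\<exists>x. P x"
    proof (cases "3 \<le> i")
      case False
      then show ?thesis unfolding P_def using surj[of i "unit_vec (l i) c"] less.prems i by auto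
    next
      case True
      have zC: "z \<in> carrier_vec (dE (i-2))" and
        gz: "g (i-2) *\<^sub>v z = (if c = 0 then 0\<^sub>v (l (i-2)) else unit_vec (l (i-2)) (c-1))"
      proof -
        have "z \<in> carrier_vec (dE (i-2)) \<and> g (i-2) *\<^sub>v z = (if c = 0 then 0\<^sub>v (l (i-2)) else unit_vec (l (i-2)) (c-1))"
        proof (cases "c = 0")
          case True
          have "g (i-2) \<in> carrier_mat (l (i-2)) (dE (i-2))" using gC[of "i-2"] \<open>3 \<le> i\<close> less.prems by auto
          from mat_vec_zero[OF this] show ?thesis unfolding z_def using True i by simp
        next
          case False
          have "l (i-2) = l i'" using lJ_new[OF st, of i'] iJ i by simp
          then have "c - 1 < l (i-2)" using c False by simp
          then show ?thesis using less.IH[of "i-2" "c-1"] \<open>3 \<le> i\<close> less.prems False unfolding z_def i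
            by auto
        qed
        then show "z \<in> carrier_vec (dE (i-2))" "g (i-2) *\<^sub>v z = (if c = 0 then 0\<^sub>v (l (i-2)) else unit_vec (l (i-2)) (c-1))"
          by auto
      qed
      have "c = l (i-1)" using c i by simp
      from newcol[OF True less.prems(2) iJ this zC gz] show ?thesis unfolding P_def using i
        by (simp add: numeral_2_eq_2) blast
    qed
    have PX: "P (X i c)" unfolding Xi using someI_ex[OF ex] .
    show ?thesis using PX i unfolding P_def z_def by (simp add: numeral_2_eq_2)
  qed
qed


definition "sv i = mat (dE i) (l i) (\<lambda>(r,c). X i c $ r)"

lemma sv_C: "sv i \<in> carrier_mat (dE i) (l i)" unfolding sv_def by simp

lemma col_sv: "1 \<le> i \<Longrightarrow> i \<le> t \<Longrightarrow> c < l i \<Longrightarrow> col (sv i) c = X i c"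
  unfolding sv_def using inv[of i c] by (auto intro!: eq_vecI)

lemma sv_unit: "1 \<le> i \<Longrightarrow> i \<le> t \<Longrightarrow> c < l i \<Longrightarrow> sv i *\<^sub>v unit_vec (l i) c = X i c"
  using mat_unit[OF sv_C] col_sv by simp

lemma splits: "is_hom t D E sv \<and> (\<forall>i\<in>{1..t}. g i * sv i = 1\<^sub>m (l i))"
proof -
  have h2: "sv (i+1) * alp D i = alp E i * sv i" if i: "1 \<le> i" "i + 1 \<le> t" for i
  proof (rule mat_col_eqI)
    fix c assume "c < dim_col (alp E i * sv i)"
    then have c: "c < l i" using sv_C[of i] by simp
    have ci: "c < l (i+1)" using c lJ_mono[OF st, of i "i+1"] by simp
    have A: "alp E i \<in> carrier_mat (dE (i+1)) (dE i)" using alpE i by simp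
    have "col (sv (i+1) * alp D i) c = sv (i+1) *\<^sub>v col (alp D i) c"
      using col_mult2[OF sv_C alpD_C c] .
    also have "col (alp D i) c = alp D i *\<^sub>v unit_vec (l i) c"
      using mat_unit[OF alpD_C c] by simp
    also have "\<dots> = unit_vec (l (i+1)) c" using alpD_unit[OF st c] .
    also have "sv (i+1) *\<^sub>v unit_vec (l (i+1)) c = X (i+1) c" using sv_unit[of "i+1" c] i ci by simp
    also have "\<dots> = alp E i *\<^sub>v X i c" using c by (simp add: Xv.simps(2))
    also have "\<dots> = alp E i *\<^sub>v col (sv i) c" using col_sv[of i c] i c by simp
    also have "\<dots> = col (alp E i * sv i) c" using col_mult2[OF A sv_C c] by simp
    finally show "col (sv (i+1) * alp D i) c = col (alp E i * sv i) c" .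
  qed (use sv_C[of "i+1"] sv_C[of i] alpE[OF that] in auto)
  have h3: "sv j * bet D j = bet E j * sv (j+2)" if j: "1 \<le> j" "j + 2 \<le> t" for j
  proof (rule mat_col_eqI)
    fix c assume "c < dim_col (bet E j * sv (j+2))"
    then have c: "c < l (j+2)" using sv_C[of "j+2"] by simp
    have B: "bet E j \<in> carrier_mat (dE j) (dE (j+2))" using betE j by simp
    have "col (sv j * bet D j) c = sv j *\<^sub>v col (bet D j) c"
      using col_mult2[OF sv_C betD_C c] .
    also have "col (bet D j) c = bet D j *\<^sub>v unit_vec (l (j+2)) c"
      using mat_unit[OF betD_C c] by simp
    also have "\<dots> = (if c = 0 then 0\<^sub>v (l j) else unit_vec (l j) (c-1))" using betD_unit[OF st c] .
    also have "sv j *\<^sub>v \<dots> = (if c = 0 then 0\<^sub>v (dE j) else X j (c-1))"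
    proof (cases "c = 0")
      case True then show ?thesis using mat_vec_zero[OF sv_C[of j]] by simp
    next
      case False
      have "c - 1 < l j" using lJ_SS[OF st, of j] c False by simp
      then show ?thesis using False sv_unit[of j "c-1"] j by simp
    qed
    also have "\<dots> = bet E j *\<^sub>v X (j+2) c" using inv[of "j+2" c] j c by simp
    also have "\<dots> = bet E j *\<^sub>v col (sv (j+2)) c" using col_sv[of "j+2" c] j c by simp
    also have "\<dots> = col (bet E j * sv (j+2)) c" using col_mult2[OF B sv_C c] by simp
    finally show "col (sv j * bet D j) c = col (bet E j * sv (j+2)) c" .
  qed (use sv_C[of "j+2"] sv_C[of j] betE[OF that] in auto)
  have h4: "g i * sv i = 1\<^sub>m (l i)" if i: "1 \<le> i" "i \<le> t" for i
  proof (rule mat_col_eqI)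
    fix c assume "c < dim_col (1\<^sub>m (l i) :: 'k mat)"
    then have c: "c < l i" by simp
    have "col (g i * sv i) c = g i *\<^sub>v col (sv i) c" using col_mult2[OF gC[OF i] sv_C c] .
    also have "\<dots> = unit_vec (l i) c" using col_sv[OF i c] inv[OF i c] by simp
    finally show "col (g i * sv i) c = col (1\<^sub>m (l i)) c" using c by simp
  qed (use sv_C[of i] gC[OF that] in auto)
  show ?thesis unfolding is_hom_def using sv_C h2 h3 h4 by auto
qed

end

theorem theorem2p3:
  fixes t :: nat and J :: "nat set"
  assumes "alg_closed_field TYPE('k::field)"
    and "t \<ge> 3"
    and "standard t J" and "J \<noteq> {}"
  shows "Ext1_zero t (Delta J :: 'k qrep) (Delta J)"
  unfolding Ext1_zero_def
proof (intro allI impI)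
  fix E :: "'k qrep" and f g
  assume "short_exact t (Delta J) E (Delta J) f g"
  then interpret ext_setup t J E f g using assms by unfold_locales auto
  show "\<exists>s. is_hom t (Delta J) E s \<and> (\<forall>i\<in>{1..t}. g i * s i = 1\<^sub>m (dimv (Delta J) i))"
    using splits by auto
qed

end
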